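(* Let $n\ge3$ and let $A$ be a set of vertices of $C_n$ with $2\le|A|\le n$. Then the output of $\textsc{Ascending Local Search}(C_n,W,A)$ is a maximizer of $W$ on $C_n$.
   Context: $C_n$ has vertex set $\{0,\dots,n-1\}$ with $i$ adjacent to $i+1\bmod n$. $W(X)=\sum_{\{u,v\}\subseteq X,u\ne v}d(u,v)$ over unordered pairs, $d$ shortest-path distance; $X$ is a maximizer of $W$ if $W(X)=\max\{W(B):|B|=|X|\}$. A perturbation of $X$ in a graph $G$ is $(X\setminus\{u\})\cup\{v\}$ with $u\in X$, $v\in V(G)\setminus X$, $uv\in E(G)$. $\textsc{Ascending Local Search}(G,F,A)$: set $X=A$; list all perturbations of $X$ as $L(0),L(1),\dots$; if $F(L(i))>F(X)$ for some $i$, replace $X$ by $L(j)$ for the least such $j$ and repeat; otherwise return $X$. *)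

theory Defs
  imports Main
begin

text \<open>A graph is given by a vertex set V and a symmetric adjacency relation E.\<close>

inductive walk_len :: "('a \<Rightarrow> 'a \<Rightarrow> bool) \<Rightarrow> nat \<Rightarrow> 'a \<Rightarrow> 'a \<Rightarrow> bool"
  for E where
  wl0: "walk_len E 0 u u"
| wlS: "E u w \<Longrightarrow> walk_len E k w v \<Longrightarrow> walk_len E (Suc k) u v"

definition gdist :: "('a \<Rightarrow> 'a \<Rightarrow> bool) \<Rightarrow> 'a \<Rightarrow> 'a \<Rightarrow> nat" where
  "gdist E u v = (LEAST k. walk_len E k u v)"

definition cycle_V :: "nat \<Rightarrow> nat set" where
  "cycle_V n = {0..<n}"

definition cycle_E :: "nat \<Rightarrow> nat \<Rightarrow> nat \<Rightarrow> bool" where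
  "cycle_E n u v \<longleftrightarrow> u < n \<and> v < n \<and> (v = (u + 1) mod n \<or> u = (v + 1) mod n)"

text \<open>W(X): sum of distances over unordered pairs of distinct vertices of X
  (vertices are naturals, so unordered pairs are indexed by u < v).\<close>
definition Wsum :: "(nat \<Rightarrow> nat \<Rightarrow> bool) \<Rightarrow> nat set \<Rightarrow> nat" where
  "Wsum E X = (\<Sum>(u, v) \<in> {(u, v). u \<in> X \<and> v \<in> X \<and> u < v}. gdist E u v)"

definition is_maximizer :: "'a set \<Rightarrow> ('a set \<Rightarrow> 'b::linorder) \<Rightarrow> 'a set \<Rightarrow> bool" where
  "is_maximizer V F X \<longleftrightarrow> X \<subseteq> V \<and>
     (\<forall>B. B \<subseteq> V \<and> card B = card X \<longrightarrow> F B \<le> F X)"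

definition perturbations :: "'a set \<Rightarrow> ('a \<Rightarrow> 'a \<Rightarrow> bool) \<Rightarrow> 'a set \<Rightarrow> 'a set set" where
  "perturbations V E X =
     {(X - {u}) \<union> {v} | u v. u \<in> X \<and> v \<in> V - X \<and> E u v}"

text \<open>als V E F A Y: some run of Ascending Local Search(G, F, A) returns Y.
  At each step the perturbations of the current X are listed in an arbitrary
  order L (a duplicate-free enumeration); if some L(i) improves F, X is
  replaced by L(j) for the least such j.\<close>
inductive als :: "'a set \<Rightarrow> ('a \<Rightarrow> 'a \<Rightarrow> bool) \<Rightarrow> ('a set \<Rightarrow> 'b::linorder) \<Rightarrow> 'a set \<Rightarrow> 'a set \<Rightarrow> bool"
  for V E F where
  als_stop: "\<not> (\<exists>Y \<in> perturbations V E X. F Y > F X) \<Longrightarrow> als V E F X X"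
| als_step: "distinct L \<Longrightarrow> set L = perturbations V E X \<Longrightarrow>
     (\<exists>i < length L. F (L ! i) > F X) \<Longrightarrow>
     j = (LEAST i. i < length L \<and> F (L ! i) > F X) \<Longrightarrow>
     als V E F (L ! j) Z \<Longrightarrow> als V E F X Z"

end

theory Submission
  imports Defs
begin


locale cyc = fixes n :: nat assumes n3: "3 \<le> n"
begin

abbreviation "N \<equiv> int n"
abbreviation "Mh \<equiv> int n div 2"
abbreviation "Hh \<equiv> int n - int n div 2"
abbreviation "ee \<equiv> int n mod 2"

lemma basics: "Mh \<ge> 1" "Hh = Mh + ee" "ee = 0 \<or> ee = 1" "N = 2*Mh + ee" "N \<ge> 3"
  using n3 by auto

lemma bs: "1 \<le> Mh" "2*Mh \<le> N" "N \<le> 2*Mh + 1" "3 \<le> N"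
  using n3 by auto

lemma bee: "ee = N - 2*Mh" by (rule minus_mult_div_eq_mod[symmetric])

definition cd :: "nat \<Rightarrow> nat \<Rightarrow> int" where
  "cd u v = min ((int v - int u) mod N) (N - (int v - int u) mod N)"

abbreviation "E \<equiv> cycle_E n"

lemma walk_fwd: "u < n \<Longrightarrow> walk_len E k u ((u + k) mod n)"
proof (induction k arbitrary: u)
  case 0 then show ?case by (simp add: wl0)
next
  case (Suc k)
  have e: "E u ((u+1) mod n)" using Suc.prems n3 by (simp add: cycle_E_def)
  have "walk_len E k ((u+1) mod n) (((u+1) mod n + k) mod n)" using Suc.IH n3 by simp
  moreover have "((u+1) mod n + k) mod n = (u + Suc k) mod n" by (simp add: mod_add_left_eq)
  ultimately show ?case using e wlS[of E u "(u+1) mod n" k] by simp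
qed

lemma walk_bwd: "v < n \<Longrightarrow> walk_len E k ((v + k) mod n) v"
proof (induction k)
  case 0 then show ?case by (simp add: wl0)
next
  case (Suc k)
  have "((v+k) mod n + 1) mod n = (v + Suc k) mod n" using mod_add_left_eq[of "v+k" n 1] by simp
  then have e: "E ((v + Suc k) mod n) ((v+k) mod n)" using Suc.prems n3
    unfolding cycle_E_def by auto
  then show ?case using wlS[OF e Suc.IH[OF Suc.prems]] by simp
qed

lemma walk_lt: "walk_len E k u v \<Longrightarrow> u < n \<Longrightarrow> v < n"
  by (induction rule: walk_len.induct) (auto simp: cycle_E_def)

lemma cd_step: assumes "u < n" "w < n" "v < n" "w = (u+1) mod n \<or> u = (w+1) mod n"
  shows "cd u v \<le> cd w v + 1"
proof -
  have iw: "int w = (int u + 1) mod N \<or> int u = (int w + 1) mod N"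
    using assms(4) by (metis of_nat_1 of_nat_add zmod_int)
  define p where "p = (int v - int w) mod N"
  define q where "q = (int v - int u) mod N"
  have p: "0 \<le> p" "p < N" unfolding p_def using n3 by auto
  have q: "0 \<le> q" "q < N" unfolding q_def using n3 by auto
  have "q = (p + 1) mod N \<or> p = (q + 1) mod N"
  proof (cases "int w = (int u + 1) mod N")
    case True
    then have "p = (int v - (int u + 1)) mod N" unfolding p_def by (simp add: mod_diff_right_eq)
    then have "(p + 1) mod N = (int v - int u) mod N" by (simp add: mod_add_left_eq)
    then show ?thesis unfolding q_def by simp
  next
    case False
    then have "int u = (int w + 1) mod N" using iw by simp
    then have "q = (int v - (int w + 1)) mod N" unfolding q_def by (simp add: mod_diff_right_eq)
    then have "(q + 1) mod N = (int v - int w) mod N" by (simp add: mod_add_left_eq)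
    then show ?thesis unfolding p_def by simp
  qed
  moreover have "(p+1) mod N = (if p + 1 = N then 0 else p + 1)" using p by auto
  moreover have "(q+1) mod N = (if q + 1 = N then 0 else q + 1)" using q by auto
  ultimately show ?thesis unfolding cd_def p_def[symmetric] q_def[symmetric]
    using p q by (auto split: if_splits)
qed

lemma walk_lower: "walk_len E k u v \<Longrightarrow> u < n \<Longrightarrow> cd u v \<le> int k"
proof (induction rule: walk_len.induct)
  case (wl0 u) then show ?case by (simp add: cd_def)
next
  case (wlS u w k v)
  have "w < n" using wlS.hyps(1) by (simp add: cycle_E_def)
  have "v < n" using walk_lt[OF wlS.hyps(2) \<open>w < n\<close>] .
  then have "cd u v \<le> cd w v + 1"
    using cd_step wlS by (auto simp: cycle_E_def)
  then show ?case using wlS \<open>w < n\<close> by simp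
qed

lemma cd_nonneg: "0 \<le> cd u v"
proof -
  have "0 \<le> (int v - int u) mod N" "(int v - int u) mod N < N" using n3 by auto
  then show ?thesis unfolding cd_def by simp
qed

lemma walk_exists: assumes "u < n" "v < n" shows "walk_len E (nat (cd u v)) u v"
proof -
  define d where "d = (int v - int u) mod N"
  have d: "0 \<le> d" "d < N" unfolding d_def using n3 by auto
  have f: "walk_len E (nat d) u v"
  proof -
    have "int ((u + nat d) mod n) = (int u + d) mod N" using d by (simp add: zmod_int)
    also have "\<dots> = int v" unfolding d_def using assms by (simp add: mod_add_right_eq)
    finally show ?thesis using walk_fwd[OF assms(1), of "nat d"] by simp
  qed
  have b: "walk_len E (nat (N - d)) u v" if "d > 0"
  proof -
    have "int ((v + nat (N - d)) mod n) = (int v + (N - d)) mod N" using d by (simp add: zmod_int)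
    also have "\<dots> = (int v - d) mod N"
    proof -
      have eq: "int v + (N - d) = (int v - d) + N" by simp
      show ?thesis by (subst eq) (rule mod_add_self2)
    qed
    also have "\<dots> = (int v - (int v - int u)) mod N" unfolding d_def by (simp add: mod_diff_right_eq)
    also have "\<dots> = int u" using assms by simp
    finally show ?thesis using walk_bwd[OF assms(2), of "nat (N - d)"] by simp
  qed
  show ?thesis
  proof (cases "d = 0")
    case True then show ?thesis using f by (simp add: cd_def d_def[symmetric])
  next
    case False then show ?thesis using f b d by (simp add: cd_def d_def[symmetric] min_def)
  qed
qed

lemma gdist_cd: assumes "u < n" "v < n" shows "int (gdist E u v) = cd u v"
proof -
  have "gdist E u v = nat (cd u v)" unfolding gdist_def
    by (rule Least_equality) (use walk_exists[OF assms] walk_lower assms in force)+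
  then show ?thesis using cd_nonneg by simp
qed

end


context cyc begin

lemma cancel_aux: "(a::int) + x = x + b \<Longrightarrow> b = a" by simp

lemma per_step:
  fixes f :: "int \<Rightarrow> int"
  assumes per: "\<And>x. f (x + N) = f x"
  shows "(\<Sum>i<n. f (c + 1 + int i)) = (\<Sum>i<n. f (c + int i))"
proof -
  have a: "(\<Sum>i<Suc n. f (c + int i)) = (\<Sum>i<n. f (c + int i)) + f (c + N)" by simp
  have b: "(\<Sum>i<Suc n. f (c + int i)) = f c + (\<Sum>i<n. f (c + int (Suc i)))"
    using sum.lessThan_Suc_shift[of "\<lambda>i. f (c + int i)" n] by simp
  have c: "(\<Sum>i<n. f (c + int (Suc i))) = (\<Sum>i<n. f (c + 1 + int i))"
    by (intro sum.cong refl arg_cong[where f=f]) simp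
  have e1: "(\<Sum>i<n. f (c + int i)) + f (c + N) = f c + (\<Sum>i<n. f (c + int (Suc i)))"
    using a b by (rule trans[OF sym])
  then have "(\<Sum>i<n. f (c + int i)) + f c = f c + (\<Sum>i<n. f (c + 1 + int i))"
    unfolding c per[of c] .
  then show ?thesis by linarith
qed


lemma per_shift:
  fixes f :: "int \<Rightarrow> int"
  assumes per: "\<And>x. f (x + N) = f x"
  shows "(\<Sum>i<n. f (c + int i)) = (\<Sum>i<n. f (int i))"
proof (induction c rule: int_induct[where k=0])
  case base then show ?case by simp
next
  case (step1 i)
  show ?case using per_step[where f=f, OF per, of i] step1.IH by (rule trans)
next
  case (step2 i)
  have a: "(\<Sum>x<n. f (i - 1 + 1 + int x)) = (\<Sum>x<n. f (i - 1 + int x))"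
    by (rule per_step[where f=f, OF per])
  have b: "(\<Sum>x<n. f (i - 1 + 1 + int x)) = (\<Sum>x<n. f (i + int x))" by simp
  show ?case using a b step2.IH by simp
qed

lemma per_refl:
  fixes f :: "int \<Rightarrow> int"
  assumes per: "\<And>x. f (x + N) = f x"
  shows "(\<Sum>i<n. f (c - int i)) = (\<Sum>i<n. f (int i))"
proof -
  have "(\<Sum>i<n. f (c - int i)) = (\<Sum>i<n. f (c - int (n - Suc i)))"
    by (rule sum.nat_diff_reindex[symmetric])
  also have "\<dots> = (\<Sum>i<n. f ((c - N + 1) + int i))"
  proof (rule sum.cong[OF refl])
    fix i assume "i \<in> {..<n}"
    then have e: "c - int (n - Suc i) = (c - N + 1) + int i" by (simp add: of_nat_diff)
    show "f (c - int (n - Suc i)) = f ((c - N + 1) + int i)" by (simp only: e)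
  qed
  also have "\<dots> = (\<Sum>i<n. f (int i))" by (rule per_shift[where f=f, OF per])
  finally show ?thesis .
qed

lemma cnt:
  assumes "0 \<le> lo" "lo \<le> hi" "hi \<le> N"
  shows "(\<Sum>i<n. of_bool (lo \<le> int i \<and> int i < hi) :: int) = hi - lo"
proof -
  have "{..<n} \<inter> {i. lo \<le> int i \<and> int i < hi} = {nat lo..<nat hi}"
    using assms by auto
  then show ?thesis using assms by simp
qed

definition rr :: "int \<Rightarrow> nat \<Rightarrow> int" where "rr j z = (int z - j - 1) mod N"
definition inA :: "int \<Rightarrow> nat \<Rightarrow> bool" where "inA j z \<longleftrightarrow> rr j z < Mh"
definition inB :: "int \<Rightarrow> nat \<Rightarrow> bool" where "inB j z \<longleftrightarrow> Hh \<le> rr j z"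
definition sepI :: "int \<Rightarrow> nat \<Rightarrow> nat \<Rightarrow> int" where
  "sepI j u v = of_bool (inA j u) * of_bool (inB j v) + of_bool (inB j u) * of_bool (inA j v)"

lemma rr_per: "rr (j + N) z = rr j z"
proof -
  have "(int z - (j + N) - 1) mod N = ((int z - j - 1) + (- 1) * N) mod N"
    by (rule arg_cong[where f="\<lambda>x. x mod N"]) simp
  also have "\<dots> = (int z - j - 1) mod N" by (rule mod_mult_self1)
  finally show ?thesis unfolding rr_def .
qed

lemma rr_bounds: "0 \<le> rr j z" "rr j z < N" unfolding rr_def using n3 by auto

lemma ob2: "(a \<and> b \<longleftrightarrow> x) \<Longrightarrow> (c \<and> e \<longleftrightarrow> y) \<Longrightarrow>
   (of_bool a * of_bool b + of_bool c * of_bool e :: int) = of_bool x + of_bool y"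
  by auto

lemma cut_identity:
  assumes uv: "u < n" "v < n" "u \<noteq> v"
  shows "2 * cd u v = (\<Sum>i<n. sepI (int i) u v) + ee"
proof -
  define d where "d = (int v - int u) mod N"
  have d0: "0 \<le> d" "d < N" unfolding d_def using n3 by auto
  have dne: "d \<noteq> 0"
  proof
    assume "d = 0"
    then have "N dvd int v - int u" unfolding d_def by (simp add: dvd_eq_mod_eq_0)
    then have "int v mod N = int u mod N" by (simp add: mod_eq_dvd_iff)
    then show False using uv by simp
  qed
  have d1: "1 \<le> d" using d0 dne by simp
  have "(\<Sum>i<n. sepI (int i) u v) = (\<Sum>i<n. sepI (int u - 1 - int i) u v)"
    by (rule per_refl[symmetric]) (simp add: sepI_def inA_def inB_def rr_per)
  also have "\<dots> = (\<Sum>i<n. of_bool (int i < Mh) * of_bool (Hh \<le> (int i + d) mod N)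
                 + of_bool (Hh \<le> int i) * of_bool ((int i + d) mod N < Mh))"
  proof (rule sum.cong[OF refl])
    fix i assume "i \<in> {..<n}"
    then have i: "int i < N" by simp
    have r1: "rr (int u - 1 - int i) u = int i" unfolding rr_def using i by simp
    have "rr (int u - 1 - int i) v = (int i + (int v - int u)) mod N" unfolding rr_def
      by (simp add: algebra_simps)
    also have "\<dots> = (int i + d) mod N" unfolding d_def by (simp add: mod_add_right_eq)
    finally have r2: "rr (int u - 1 - int i) v = (int i + d) mod N" .
    show "sepI (int u - 1 - int i) u v = of_bool (int i < Mh) * of_bool (Hh \<le> (int i + d) mod N)
                 + of_bool (Hh \<le> int i) * of_bool ((int i + d) mod N < Mh)"
      unfolding sepI_def inA_def inB_def r1 r2 ..
  qed
  finally have S: "(\<Sum>i<n. sepI (int i) u v) = \<dots>" .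
  have md: "(int i + d) mod N = (if int i + d < N then int i + d else int i + d - N)" if "i < n" for i
  proof (cases "int i + d < N")
    case True then show ?thesis using d0 by simp
  next
    case False
    have "(int i + d) mod N = ((int i + d - N) + N) mod N" by simp
    also have "\<dots> = (int i + d - N) mod N" by (rule mod_add_self2)
    also have "\<dots> = int i + d - N" using False d0 that by (intro mod_pos_pos_trivial) auto
    finally show ?thesis using False by simp
  qed
  show ?thesis
  proof (cases "d \<le> Mh")
    case True
    have "(\<Sum>i<n. of_bool (int i < Mh) * of_bool (Hh \<le> (int i + d) mod N)
                 + of_bool (Hh \<le> int i) * of_bool ((int i + d) mod N < Mh) :: int)
        = (\<Sum>i<n. of_bool (Hh - d \<le> int i \<and> int i < Mh) + of_bool (N - d \<le> int i \<and> int i < N))"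
    proof (rule sum.cong[OF refl])
      fix i assume "i \<in> {..<n}"
      then have i: "i < n" by simp
      show "of_bool (int i < Mh) * of_bool (Hh \<le> (int i + d) mod N)
                 + of_bool (Hh \<le> int i) * of_bool ((int i + d) mod N < Mh)
          = (of_bool (Hh - d \<le> int i \<and> int i < Mh) + of_bool (N - d \<le> int i \<and> int i < N) :: int)"
      proof (rule ob2)
        have "int i < N" using i by simp
        then show "int i < Mh \<and> Hh \<le> (int i + d) mod N \<longleftrightarrow> Hh - d \<le> int i \<and> int i < Mh"
          "Hh \<le> int i \<and> (int i + d) mod N < Mh \<longleftrightarrow> N - d \<le> int i \<and> int i < N"
          using md[OF i] bs True d0 dne by (cases "int i + d < N"; auto)+
      qed
    qed
    also have "\<dots> = (Mh - (Hh - d)) + (N - (N - d))"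
    proof -
      have c1: "(\<Sum>i<n. of_bool (Hh - d \<le> int i \<and> int i < Mh) :: int) = Mh - (Hh - d)"
        by (rule cnt) (use True d0 d1 bs in linarith)+
      have c2: "(\<Sum>i<n. of_bool (N - d \<le> int i \<and> int i < N) :: int) = N - (N - d)"
        by (rule cnt) (use True d0 d1 bs in linarith)+
      show ?thesis by (simp only: sum.distrib c1 c2)
    qed
    finally have F: "(\<Sum>i<n. sepI (int i) u v) = Mh - (Hh - d) + (N - (N - d))" using S by simp
    have "cd u v = d" using True bs unfolding cd_def d_def[symmetric] by (simp add: min_def)
    then show ?thesis using F bee by linarith
  next
    case False
    have "(\<Sum>i<n. of_bool (int i < Mh) * of_bool (Hh \<le> (int i + d) mod N)
                 + of_bool (Hh \<le> int i) * of_bool ((int i + d) mod N < Mh) :: int)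
        = (\<Sum>i<n. of_bool (0 \<le> int i \<and> int i < N - d) + of_bool (Hh \<le> int i \<and> int i < N + Mh - d))"
    proof (rule sum.cong[OF refl])
      fix i assume "i \<in> {..<n}"
      then have i: "i < n" by simp
      show "of_bool (int i < Mh) * of_bool (Hh \<le> (int i + d) mod N)
                 + of_bool (Hh \<le> int i) * of_bool ((int i + d) mod N < Mh)
          = (of_bool (0 \<le> int i \<and> int i < N - d) + of_bool (Hh \<le> int i \<and> int i < N + Mh - d) :: int)"
      proof (rule ob2)
        have "int i < N" using i by simp
        then show "int i < Mh \<and> Hh \<le> (int i + d) mod N \<longleftrightarrow> 0 \<le> int i \<and> int i < N - d"
          "Hh \<le> int i \<and> (int i + d) mod N < Mh \<longleftrightarrow> Hh \<le> int i \<and> int i < N + Mh - d"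
          using md[OF i] bs False d0 dne by (cases "int i + d < N"; auto)+
      qed
    qed
    also have "\<dots> = (N - d - 0) + (N + Mh - d - Hh)"
    proof -
      have c1: "(\<Sum>i<n. of_bool (0 \<le> int i \<and> int i < N - d) :: int) = N - d - 0"
        by (rule cnt) (use False d0 d1 bs in linarith)+
      have c2: "(\<Sum>i<n. of_bool (Hh \<le> int i \<and> int i < N + Mh - d) :: int) = N + Mh - d - Hh"
        by (rule cnt) (use False d0 d1 bs in linarith)+
      show ?thesis by (simp only: sum.distrib c1 c2)
    qed
    finally have F: "(\<Sum>i<n. sepI (int i) u v) = N - d - 0 + (N + Mh - d - Hh)" using S by simp
    have "cd u v = N - d" using False bs unfolding cd_def d_def[symmetric] by (simp add: min_def)
    then show ?thesis using F bee by linarith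
  qed
qed

end


lemma pair_sum:
  fixes g :: "nat \<Rightarrow> nat \<Rightarrow> int"
  assumes fin: "finite X" and sym: "\<And>u v. g u v = g v u"
  shows "2 * (\<Sum>(u,v)\<in>{(u,v). u \<in> X \<and> v \<in> X \<and> u < v}. g u v)
         = (\<Sum>u\<in>X. \<Sum>v\<in>X. g u v) - (\<Sum>u\<in>X. g u u)"
proof -
  define P where "P = {(u,v). u \<in> X \<and> v \<in> X \<and> u < v}"
  define Q where "Q = {(u,v). u \<in> X \<and> v \<in> X \<and> v < u}"
  define D where "D = {(u,v). u \<in> X \<and> v \<in> X \<and> u = v}"
  have XX: "X \<times> X = (P \<union> Q) \<union> D" unfolding P_def Q_def D_def by auto
  have fP: "finite P" unfolding P_def by (rule finite_subset[of _ "X \<times> X"]) (use fin in auto)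
  have fQ: "finite Q" unfolding Q_def by (rule finite_subset[of _ "X \<times> X"]) (use fin in auto)
  have fD: "finite D" unfolding D_def by (rule finite_subset[of _ "X \<times> X"]) (use fin in auto)
  have "(\<Sum>u\<in>X. \<Sum>v\<in>X. g u v) = (\<Sum>p\<in>X \<times> X. case_prod g p)"
    by (rule sum.cartesian_product)
  also have "\<dots> = (\<Sum>p\<in>P \<union> Q. case_prod g p) + (\<Sum>p\<in>D. case_prod g p)"
    unfolding XX by (rule sum.union_disjoint) (use fP fQ fD in \<open>auto simp: P_def Q_def D_def\<close>)
  also have "(\<Sum>p\<in>P \<union> Q. case_prod g p) = (\<Sum>p\<in>P. case_prod g p) + (\<Sum>p\<in>Q. case_prod g p)"
    by (rule sum.union_disjoint) (use fP fQ in \<open>auto simp: P_def Q_def\<close>)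
  also have "(\<Sum>p\<in>Q. case_prod g p) = (\<Sum>p\<in>P. case_prod g p)"
  proof -
    have "Q = prod.swap ` P" unfolding P_def Q_def by auto
    then have "(\<Sum>p\<in>Q. case_prod g p) = (\<Sum>p\<in>P. case_prod g (prod.swap p))"
      by (simp add: sum.reindex)
    also have "\<dots> = (\<Sum>p\<in>P. case_prod g p)"
      by (rule sum.cong) (auto simp: sym)
    finally show ?thesis .
  qed
  also have "(\<Sum>p\<in>D. case_prod g p) = (\<Sum>u\<in>X. g u u)"
  proof -
    have "D = (\<lambda>u. (u,u)) ` X" unfolding D_def by auto
    then show ?thesis by (simp add: sum.reindex inj_on_def)
  qed
  finally show ?thesis unfolding P_def by simp
qed

context cyc begin

definition al :: "nat set \<Rightarrow> int \<Rightarrow> int" where "al X j = (\<Sum>z\<in>X. of_bool (inA j z))"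
definition be :: "nat set \<Rightarrow> int \<Rightarrow> int" where "be X j = (\<Sum>z\<in>X. of_bool (inB j z))"
definition Pairs :: "nat set \<Rightarrow> (nat \<times> nat) set" where
  "Pairs X = {(u,v). u \<in> X \<and> v \<in> X \<and> u < v}"

lemma cd_sym: "cd u v = cd v u"
proof -
  define d where "d = (int v - int u) mod N"
  have d0: "0 \<le> d" "d < N" unfolding d_def using n3 by auto
  have "(int u - int v) mod N = (- (int v - int u)) mod N" by simp
  also have "\<dots> = (if d = 0 then 0 else N - d)" unfolding d_def by (rule zmod_zminus1_eq_if)
  finally have e: "(int u - int v) mod N = (if d = 0 then 0 else N - d)" .
  show ?thesis unfolding cd_def d_def[symmetric] e using d0 by (auto simp: min_def)
qed

lemma cd_self: "cd u u = 0" unfolding cd_def by simp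

lemma W_int: assumes "X \<subseteq> {..<n}"
  shows "int (Wsum E X) = (\<Sum>(u,v)\<in>Pairs X. cd u v)"
proof -
  have "int (Wsum E X) = (\<Sum>(u,v)\<in>Pairs X. int (gdist E u v))"
    unfolding Wsum_def Pairs_def by (simp add: of_nat_sum case_prod_beta)
  also have "\<dots> = (\<Sum>(u,v)\<in>Pairs X. cd u v)"
    by (rule sum.cong) (use assms in \<open>auto simp: Pairs_def gdist_cd\<close>)
  finally show ?thesis .
qed

lemma finX: "X \<subseteq> {..<n} \<Longrightarrow> finite X" using finite_subset by blast

lemma W_dd: assumes "X \<subseteq> {..<n}"
  shows "2 * int (Wsum E X) = (\<Sum>u\<in>X. \<Sum>v\<in>X. cd u v)"
  using pair_sum[OF finX[OF assms], of cd] cd_sym cd_self W_int[OF assms]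
  unfolding Pairs_def by simp

lemma sep_self: "sepI j u u = 0"
  unfolding sepI_def inA_def inB_def using bs by auto

lemma sep_sym: "sepI j u v = sepI j v u"
  unfolding sepI_def by (simp add: mult.commute add.commute)

lemma card_pairs: assumes "finite X"
  shows "2 * int (card (Pairs X)) = int (card X) * int (card X) - int (card X)"
proof -
  have "2 * (\<Sum>(u,v)\<in>Pairs X. (1::int)) = (\<Sum>u\<in>X. \<Sum>v\<in>X. 1) - (\<Sum>u\<in>X. 1)"
    unfolding Pairs_def using pair_sum[OF assms, of "\<lambda>u v. 1"] by simp
  then show ?thesis by simp
qed

lemma sep_pairs: assumes "finite X"
  shows "(\<Sum>(u,v)\<in>Pairs X. sepI j u v) = al X j * be X j"
proof -
  have "2 * (\<Sum>(u,v)\<in>Pairs X. sepI j u v) = (\<Sum>u\<in>X. \<Sum>v\<in>X. sepI j u v) - (\<Sum>u\<in>X. sepI j u u)"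
    unfolding Pairs_def using pair_sum[OF assms, of "sepI j"] sep_sym by blast
  also have "(\<Sum>u\<in>X. sepI j u u) = 0" by (simp add: sep_self)
  also have "(\<Sum>u\<in>X. \<Sum>v\<in>X. sepI j u v) = al X j * be X j + be X j * al X j"
    unfolding sepI_def al_def be_def sum_product sum.distrib ..
  finally show ?thesis by simp
qed

lemma W_cut: assumes X: "X \<subseteq> {..<n}"
  shows "2 * int (Wsum E X) = (\<Sum>i<n. al X (int i) * be X (int i)) + ee * int (card (Pairs X))"
proof -
  have fin: "finite X" by (rule finX[OF X])
  have fP: "finite (Pairs X)" unfolding Pairs_def
    by (rule finite_subset[of _ "X \<times> X"]) (use fin in auto)
  have "2 * int (Wsum E X) = (\<Sum>(u,v)\<in>Pairs X. 2 * cd u v)"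
    unfolding W_int[OF X] by (simp add: sum_distrib_left case_prod_beta)
  also have "\<dots> = (\<Sum>(u,v)\<in>Pairs X. (\<Sum>i<n. sepI (int i) u v) + ee)"
    by (rule sum.cong) (use X in \<open>auto simp: Pairs_def cut_identity\<close>)
  also have "\<dots> = (\<Sum>(u,v)\<in>Pairs X. (\<Sum>i<n. sepI (int i) u v)) + ee * int (card (Pairs X))"
    by (simp add: sum.distrib case_prod_beta mult.commute)
  also have "(\<Sum>(u,v)\<in>Pairs X. (\<Sum>i<n. sepI (int i) u v)) = (\<Sum>i<n. \<Sum>(u,v)\<in>Pairs X. sepI (int i) u v)"
    unfolding case_prod_beta by (rule sum.swap)
  also have "\<dots> = (\<Sum>i<n. al X (int i) * be X (int i))"
    by (simp add: sep_pairs fin)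
  finally show ?thesis .
qed

end


context cyc begin

definition ind :: "nat set \<Rightarrow> int \<Rightarrow> int" where "ind X t = of_bool (nat (t mod N) \<in> X)"
definition b :: "nat set \<Rightarrow> int \<Rightarrow> int" where "b X j = al X j - al X (j + Hh)"

lemma ind01: "ind X t = 0 \<or> ind X t = 1" unfolding ind_def by simp

lemma rr_mod: "rr (j mod N) z = rr j z"
proof -
  have "(int z - j mod N - 1) mod N = ((int z - 1) - j mod N) mod N"
    by (rule arg_cong[where f="\<lambda>x. x mod N"]) linarith
  also have "\<dots> = ((int z - 1) - j) mod N" by (rule mod_diff_right_eq)
  also have "\<dots> = (int z - j - 1) mod N"
    by (rule arg_cong[where f="\<lambda>x. x mod N"]) linarith
  finally show ?thesis unfolding rr_def .
qed

lemma al_mod: "al X (j mod N) = al X j"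
  unfolding al_def inA_def rr_mod ..

lemma al_per: "al X (j + N) = al X j"
  unfolding al_def inA_def rr_per ..

lemma b_mod: "b X (j mod N) = b X j"
proof -
  have "al X (j mod N + Hh) = al X (j + Hh)"
    using al_mod[of X "j mod N + Hh"] al_mod[of X "j + Hh"] by (simp add: mod_add_left_eq)
  then show ?thesis unfolding b_def al_mod by simp
qed

lemma ind_mod: "ind X (t mod N) = ind X t" unfolding ind_def by simp

lemma ind_per: "ind X (t + N) = ind X t" unfolding ind_def by simp

lemma rr_shiftH: "rr (j + Hh) z = (rr j z - Hh) mod N"
proof -
  have "(int z - (j + Hh) - 1) mod N = ((int z - j - 1) - Hh) mod N"
    by (rule arg_cong[where f="\<lambda>x. x mod N"]) linarith
  also have "\<dots> = ((int z - j - 1) mod N - Hh) mod N" by (rule mod_diff_left_eq[symmetric])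
  finally show ?thesis unfolding rr_def .
qed

lemma inB_inA: "inB j z \<longleftrightarrow> inA (j + Hh) z"
proof -
  have t: "0 \<le> rr j z" "rr j z < N" by (rule rr_bounds)+
  show ?thesis unfolding inB_def inA_def rr_shiftH
  proof (cases "Hh \<le> rr j z")
    case True
    then have "(rr j z - Hh) mod N = rr j z - Hh" using t bs by (intro mod_pos_pos_trivial) auto
    then show "Hh \<le> rr j z \<longleftrightarrow> (rr j z - Hh) mod N < Mh" using True t bs by simp
  next
    case False
    have "(rr j z - Hh) mod N = ((rr j z - Hh + N) + (-1) * N) mod N"
      by (rule arg_cong[where f="\<lambda>x. x mod N"]) linarith
    also have "\<dots> = (rr j z - Hh + N) mod N" by (rule mod_mult_self1)
    also have "\<dots> = rr j z - Hh + N" using False t bs by (intro mod_pos_pos_trivial) auto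
    finally show "Hh \<le> rr j z \<longleftrightarrow> (rr j z - Hh) mod N < Mh" using False t bs by simp
  qed
qed

lemma be_al: "be X j = al X (j + Hh)"
  unfolding be_def al_def inB_inA ..

lemma rr_eq: assumes "z < n" "0 \<le> c" "c < N"
  shows "rr j z = c \<longleftrightarrow> z = nat ((j + c + 1) mod N)"
proof -
  have "rr j z = c \<longleftrightarrow> (int z - j - 1) mod N = c mod N" unfolding rr_def using assms by simp
  also have "\<dots> \<longleftrightarrow> N dvd (int z - j - 1 - c)" by (rule mod_eq_dvd_iff)
  also have "\<dots> \<longleftrightarrow> N dvd (int z - (j + c + 1))" by (simp add: algebra_simps)
  also have "\<dots> \<longleftrightarrow> int z mod N = (j + c + 1) mod N" by (rule mod_eq_dvd_iff[symmetric])
  also have "\<dots> \<longleftrightarrow> int z = (j + c + 1) mod N" using assms by simp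
  also have "\<dots> \<longleftrightarrow> z = nat ((j + c + 1) mod N)" using n3 by auto
  finally show ?thesis .
qed

lemma sum_rr_eq: assumes X: "X \<subseteq> {..<n}" and c: "0 \<le> c" "c < N"
  shows "(\<Sum>z\<in>X. of_bool (rr j z = c)) = ind X (j + c + 1)"
proof -
  have "(\<Sum>z\<in>X. of_bool (rr j z = c) :: int) = (\<Sum>z\<in>X. of_bool (z = nat ((j + c + 1) mod N)))"
    by (rule sum.cong) (use X c rr_eq in auto)
  also have "\<dots> = ind X (j + c + 1)" unfolding ind_def of_bool_def using finX[OF X]
    by (simp add: sum.delta sum.delta' del: sum_of_bool_eq)
  finally show ?thesis .
qed

lemma shift_pt: "of_bool (inA (j + 1) z) - of_bool (inA j z)
    = (of_bool (rr j z = Mh) - of_bool (rr j z = 0) :: int)"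
proof -
  have t: "0 \<le> rr j z" "rr j z < N" by (rule rr_bounds)+
  have e: "rr (j + 1) z = (rr j z - 1) mod N"
  proof -
    have "(int z - (j + 1) - 1) mod N = ((int z - j - 1) - 1) mod N"
      by (rule arg_cong[where f="\<lambda>x. x mod N"]) linarith
    also have "\<dots> = ((int z - j - 1) mod N - 1) mod N" by (rule mod_diff_left_eq[symmetric])
    finally show ?thesis unfolding rr_def .
  qed
  show ?thesis
  proof (cases "rr j z = 0")
    case True
    have "(rr j z - 1) mod N = N - 1" using True n3 by (simp add: zmod_zminus1_eq_if)
    then show ?thesis unfolding inA_def e using True bs by auto
  next
    case False
    have "(rr j z - 1) mod N = rr j z - 1" using False t by (intro mod_pos_pos_trivial) auto
    then show ?thesis unfolding inA_def e using False t by auto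
  qed
qed

lemma al_shift: assumes X: "X \<subseteq> {..<n}"
  shows "al X (j + 1) - al X j = ind X (j + Mh + 1) - ind X (j + 1)"
proof -
  have "al X (j + 1) - al X j = (\<Sum>z\<in>X. of_bool (inA (j + 1) z) - of_bool (inA j z))"
    unfolding al_def by (simp add: sum_subtractf)
  also have "\<dots> = (\<Sum>z\<in>X. of_bool (rr j z = Mh) - of_bool (rr j z = 0))"
    by (simp add: shift_pt)
  also have "\<dots> = (\<Sum>z\<in>X. of_bool (rr j z = Mh)) - (\<Sum>z\<in>X. of_bool (rr j z = 0))"
    by (simp add: sum_subtractf)
  also have "\<dots> = ind X (j + Mh + 1) - ind X (j + 0 + 1)"
    using sum_rr_eq[OF X, of Mh j] sum_rr_eq[OF X, of 0 j] bs by simp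
  finally show ?thesis by simp
qed

lemma s_pt: "of_bool (inA j z) + of_bool (inB j z) = (1 - ee * of_bool (rr j z = Mh) :: int)"
proof -
  have t: "0 \<le> rr j z" "rr j z < N" by (rule rr_bounds)+
  have "ee = 0 \<or> ee = 1" by auto
  then show ?thesis
  proof
    assume e: "ee = 0"
    then have "Hh = Mh" using bee by linarith
    then show ?thesis using e unfolding inA_def inB_def by auto
  next
    assume e: "ee = 1"
    then have "Hh = Mh + 1" using bee by linarith
    then show ?thesis using e unfolding inA_def inB_def by auto
  qed
qed

lemma s_sum: assumes X: "X \<subseteq> {..<n}"
  shows "al X j + al X (j + Hh) = int (card X) - ee * ind X (j + Mh + 1)"
proof -
  have "al X j + al X (j + Hh) = (\<Sum>z\<in>X. of_bool (inA j z) + of_bool (inB j z))"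
    unfolding be_al[symmetric] unfolding al_def be_def by (simp add: sum.distrib)
  also have "\<dots> = (\<Sum>z\<in>X. 1 - ee * of_bool (rr j z = Mh))" by (simp only: s_pt)
  also have "\<dots> = int (card X) - ee * (\<Sum>z\<in>X. of_bool (rr j z = Mh))"
    by (simp add: sum_subtractf sum_distrib_left)
  also have "\<dots> = int (card X) - ee * ind X (j + Mh + 1)"
    using sum_rr_eq[OF X, of Mh j] bs by simp
  finally show ?thesis .
qed

lemma ind_sum: assumes X: "X \<subseteq> {..<n}"
  shows "(\<Sum>i<n. ind X (c + int i)) = int (card X)"
proof -
  have "(\<Sum>i<n. ind X (c + int i)) = (\<Sum>i<n. ind X (int i))"
    by (rule per_shift) (rule ind_per)
  also have "\<dots> = (\<Sum>i<n. of_bool (i \<in> X))"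
    by (rule sum.cong) (auto simp: ind_def)
  also have "\<dots> = int (card X)"
  proof -
    have "{..<n} \<inter> {i. i \<in> X} = X" using X by auto
    then show ?thesis by simp
  qed
  finally show ?thesis .
qed

lemma b_sum: "(\<Sum>i<n. b X (int i)) = 0"
proof -
  have "(\<Sum>i<n. al X (Hh + int i)) = (\<Sum>i<n. al X (int i))"
    by (rule per_shift) (rule al_per)
  then show ?thesis unfolding b_def by (simp add: sum_subtractf add.commute)
qed

lemma b_step: assumes X: "X \<subseteq> {..<n}"
  shows "b X (j + 1) - b X j = ind X (j + Mh + 1) + ind X (j + Hh + 1) - 2 * ind X (j + 1)"
proof -
  have a1: "al X (j + 1) - al X j = ind X (j + Mh + 1) - ind X (j + 1)" by (rule al_shift[OF X])
  have a2: "al X (j + Hh + 1) - al X (j + Hh) = ind X (j + Hh + Mh + 1) - ind X (j + Hh + 1)"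
    by (rule al_shift[OF X])
  have "j + Hh + Mh + 1 = j + 1 + N" by linarith
  then have a3: "ind X (j + Hh + Mh + 1) = ind X (j + 1)" by (simp only: ind_per)
  have "j + 1 + Hh = j + Hh + 1" by linarith
  then have "b X (j + 1) = al X (j + 1) - al X (j + Hh + 1)" unfolding b_def by (simp only:)
  then show ?thesis using a1 a2 a3 unfolding b_def by linarith
qed

lemma b_anti: assumes X: "X \<subseteq> {..<n}"
  shows "b X j + b X (j + Mh) = ee * (ind X (j + Mh + 1) - ind X j)"
proof -
  have p: "al X (j + Mh + Hh) = al X j"
  proof -
    have "j + Mh + Hh = j + N" by linarith
    then show ?thesis by (simp only: al_per)
  qed
  have "b X j + b X (j + Mh) = al X (j + Mh) - al X (j + Hh)" unfolding b_def using p by simp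
  moreover have "ee = 0 \<or> ee = 1" by auto
  ultimately show ?thesis
  proof (elim disjE)
    assume s: "b X j + b X (j + Mh) = al X (j + Mh) - al X (j + Hh)" and e: "ee = 0"
    then have jj: "j + Hh = j + Mh" using bee by linarith
    show ?thesis using s e unfolding jj by simp
  next
    assume s: "b X j + b X (j + Mh) = al X (j + Mh) - al X (j + Hh)" and e: "ee = 1"
    then have h: "Hh = Mh + 1" using bee by linarith
    have "al X (j + Mh + 1) - al X (j + Mh) = ind X (j + Mh + Mh + 1) - ind X (j + Mh + 1)"
      by (rule al_shift[OF X])
    moreover have "ind X (j + Mh + Mh + 1) = ind X j"
    proof -
      have "j + Mh + Mh + 1 = j + N" using e bee by linarith
      then show ?thesis by (simp only: ind_per)
    qed
    moreover have "al X (j + Hh) = al X (j + Mh + 1)"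
    proof -
      have "j + Hh = j + Mh + 1" using h by linarith
      then show ?thesis by (simp only:)
    qed
    moreover have "ee * (ind X (j + Mh + 1) - ind X j) = ind X (j + Mh + 1) - ind X j" using e by simp
    ultimately show ?thesis using s by linarith
  qed
qed

end


context cyc begin

lemma Kdiff: assumes "1 \<le> t" "t \<le> N - 2"
  shows "min t (N - t) - min (t + 1) (N - t - 1) = of_bool (Hh \<le> t) - of_bool (t < Mh)"
proof -
  have m1: "min t (N - t) = (if 2 * t \<le> N then t else N - t)" by (auto simp: min_def)
  have m2: "min (t + 1) (N - t - 1) = (if 2 * t + 2 \<le> N then t + 1 else N - t - 1)" by (auto simp: min_def)
  have e: "ee = N - 2 * Mh" by (rule bee)
  have e01: "ee = 0 \<or> ee = 1" by auto
  consider (a) "t < Mh" | (c) "Hh \<le> t" | (b) "Mh \<le> t" "t < Hh" by linarith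
  then show ?thesis
  proof cases
    case a
    then have "2 * t + 2 \<le> N" "2 * t \<le> N" "\<not> Hh \<le> t" using bs e e01 by linarith+
    then show ?thesis using m1 m2 a by simp
  next
    case c
    then have "\<not> 2 * t + 2 \<le> N" "\<not> t < Mh" using bs e e01 by linarith+
    moreover have "2 * t \<le> N \<longrightarrow> t = N - t" using c bs e e01 by linarith
    ultimately show ?thesis using m1 m2 c by auto
  next
    case b
    then have "t = Mh" "N = 2 * Mh + 1" using bs e e01 by linarith+
    then show ?thesis using m1 m2 b by simp
  qed
qed

lemma int_suc_mod: "int ((x + 1) mod n) = (int x + 1) mod N"
  by (simp add: zmod_int ac_simps)

lemma int_pred_mod: "x < n \<Longrightarrow> int ((x + n - 1) mod n) = (int x + N - 1) mod N"
  using n3 by (simp add: zmod_int of_nat_diff)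

lemma fwd_pt: assumes "x < n" "y < n" "y \<noteq> x" "y \<noteq> (x + 1) mod n"
  shows "cd ((x + 1) mod n) y - cd x y = of_bool (inB (int x) y) - of_bool (inA (int x) y)"
proof -
  define t where "t = rr (int x) y"
  have t0: "0 \<le> t" "t < N" unfolding t_def by (rule rr_bounds)+
  have tne0: "t \<noteq> 0"
  proof
    assume "t = 0"
    then have "y = nat ((int x + 0 + 1) mod N)" using rr_eq[of y 0 "int x"] assms n3 unfolding t_def by simp
    then have "int y = int ((x + 1) mod n)" using int_suc_mod n3 by simp
    then show False using assms by simp
  qed
  have tne1: "t \<noteq> N - 1"
  proof
    assume "t = N - 1"
    then have "y = nat ((int x + (N - 1) + 1) mod N)" using rr_eq[of y "N - 1" "int x"] assms n3 unfolding t_def by simp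
    then have "int y = int x" using assms by simp
    then show False using assms by simp
  qed
  have d1: "(int y - int ((x + 1) mod n)) mod N = t"
  proof -
    have "(int y - int ((x + 1) mod n)) mod N = (int y - (int x + 1) mod N) mod N" by (simp only: int_suc_mod)
    also have "\<dots> = (int y - (int x + 1)) mod N" by (rule mod_diff_right_eq)
    also have "\<dots> = t" unfolding t_def rr_def by (rule arg_cong[where f="\<lambda>z. z mod N"]) linarith
    finally show ?thesis .
  qed
  have d2: "(int y - int x) mod N = t + 1"
  proof -
    have "(int y - int x) mod N = ((int y - int x - 1) + 1) mod N" by simp
    also have "\<dots> = ((int y - int x - 1) mod N + 1) mod N" by (rule mod_add_left_eq[symmetric])
    also have "\<dots> = (t + 1) mod N" unfolding t_def rr_def by simp
    also have "\<dots> = t + 1" using t0 tne1 by (intro mod_pos_pos_trivial) auto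
    finally show ?thesis .
  qed
  have "cd ((x + 1) mod n) y - cd x y = min t (N - t) - min (t + 1) (N - (t + 1))"
    unfolding cd_def d1 d2 ..
  also have "\<dots> = of_bool (Hh \<le> t) - of_bool (t < Mh)"
    using Kdiff[of t] t0 tne0 tne1 by (simp add: algebra_simps)
  finally show ?thesis unfolding inA_def inB_def t_def .
qed

lemma bwd_pt: assumes "x < n" "y < n" "y \<noteq> x" "y \<noteq> (x + n - 1) mod n"
  shows "cd ((x + n - 1) mod n) y - cd x y = of_bool (inA (int x - 1) y) - of_bool (inB (int x - 1) y)"
proof -
  define t where "t = rr (int x - 1) y"
  have t0: "0 \<le> t" "t < N" unfolding t_def by (rule rr_bounds)+
  have tdef: "t = (int y - int x) mod N" unfolding t_def rr_def
    by (rule arg_cong[where f="\<lambda>z. z mod N"]) linarith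
  have tne0: "t \<noteq> 0"
  proof
    assume "t = 0"
    then have "y = nat ((int x - 1 + 0 + 1) mod N)" using rr_eq[of y 0 "int x - 1"] assms n3 unfolding t_def by simp
    then have "int y = int x" using assms by simp
    then show False using assms by simp
  qed
  have tne1: "t \<noteq> N - 1"
  proof
    assume "t = N - 1"
    then have "y = nat ((int x - 1 + (N - 1) + 1) mod N)" using rr_eq[of y "N - 1" "int x - 1"] assms n3 unfolding t_def by simp
    moreover have "int x - 1 + (N - 1) + 1 = int x + N - 1" by simp
    ultimately have "int y = int ((x + n - 1) mod n)" using int_pred_mod[OF assms(1)] n3 by simp
    then show False using assms by simp
  qed
  have d1: "(int y - int ((x + n - 1) mod n)) mod N = t + 1"
  proof -
    have "(int y - int ((x + n - 1) mod n)) mod N = (int y - (int x + N - 1) mod N) mod N"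
      by (simp only: int_pred_mod[OF assms(1)])
    also have "\<dots> = (int y - (int x + N - 1)) mod N" by (rule mod_diff_right_eq)
    also have "\<dots> = ((int y - int x + 1) + (-1) * N) mod N"
      by (rule arg_cong[where f="\<lambda>z. z mod N"]) linarith
    also have "\<dots> = (int y - int x + 1) mod N" by (rule mod_mult_self1)
    also have "\<dots> = ((int y - int x) mod N + 1) mod N" by (rule mod_add_left_eq[symmetric])
    also have "\<dots> = t + 1" unfolding tdef[symmetric] using t0 tne1 by (intro mod_pos_pos_trivial) auto
    finally show ?thesis .
  qed
  have "cd ((x + n - 1) mod n) y - cd x y = min (t + 1) (N - (t + 1)) - min t (N - t)"
    unfolding cd_def d1 tdef[symmetric] ..
  also have "\<dots> = - (of_bool (Hh \<le> t) - of_bool (t < Mh))"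
    using Kdiff[of t] t0 tne0 tne1 by (simp add: algebra_simps)
  finally show ?thesis unfolding inA_def inB_def t_def by simp
qed

lemma dd_insert: assumes "finite R" "x \<notin> R"
  shows "(\<Sum>u\<in>insert x R. \<Sum>v\<in>insert x R. cd u v) = (\<Sum>u\<in>R. \<Sum>v\<in>R. cd u v) + 2 * (\<Sum>v\<in>R. cd x v)"
proof -
  have "(\<Sum>u\<in>insert x R. \<Sum>v\<in>insert x R. cd u v) = (\<Sum>v\<in>insert x R. cd x v) + (\<Sum>u\<in>R. \<Sum>v\<in>insert x R. cd u v)"
    using assms by (rule sum.insert)
  also have "(\<Sum>v\<in>insert x R. cd x v) = (\<Sum>v\<in>R. cd x v)"
    using assms by (simp add: cd_self)
  also have "(\<Sum>u\<in>R. \<Sum>v\<in>insert x R. cd u v) = (\<Sum>u\<in>R. cd u x + (\<Sum>v\<in>R. cd u v))"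
    by (rule sum.cong) (use assms in auto)
  also have "\<dots> = (\<Sum>u\<in>R. cd x u) + (\<Sum>u\<in>R. \<Sum>v\<in>R. cd u v)"
    by (simp add: sum.distrib cd_sym[of _ x])
  finally show ?thesis by simp
qed

lemma move_diff: assumes X: "X \<subseteq> {..<n}" and x: "x \<in> X" and x': "x' < n" "x' \<notin> X"
  shows "2 * int (Wsum E ((X - {x}) \<union> {x'})) - 2 * int (Wsum E X)
       = 2 * (\<Sum>v\<in>X - {x}. cd x' v - cd x v)"
proof -
  define R where "R = X - {x}"
  have fR: "finite R" unfolding R_def using finX[OF X] by simp
  have XR: "X = insert x R" unfolding R_def using x by auto
  have YR: "(X - {x}) \<union> {x'} = insert x' R" unfolding R_def by auto
  have xR: "x \<notin> R" "x' \<notin> R" unfolding R_def using x' by auto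
  have Y: "insert x' R \<subseteq> {..<n}" using X x' unfolding R_def by auto
  have "2 * int (Wsum E ((X - {x}) \<union> {x'})) = (\<Sum>u\<in>R. \<Sum>v\<in>R. cd u v) + 2 * (\<Sum>v\<in>R. cd x' v)"
    unfolding YR W_dd[OF Y] using dd_insert[OF fR xR(2)] .
  moreover have "2 * int (Wsum E X) = (\<Sum>u\<in>R. \<Sum>v\<in>R. cd u v) + 2 * (\<Sum>v\<in>R. cd x v)"
    using W_dd[OF X] dd_insert[OF fR xR(1)] XR by simp
  ultimately show ?thesis unfolding R_def[symmetric] by (simp add: sum_subtractf)
qed

lemma rr_self: "rr (int x) x = N - 1"
  unfolding rr_def using n3 by (simp add: zmod_zminus1_eq_if)

lemma rr_self2: "rr (int x - 1) x = 0"
  unfolding rr_def by simp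

lemma fwd_move: assumes X: "X \<subseteq> {..<n}" and x: "x \<in> X" and x': "(x + 1) mod n \<notin> X"
  shows "int (Wsum E ((X - {x}) \<union> {(x + 1) mod n})) - int (Wsum E X) = - b X (int x) - 1"
proof -
  have xn: "x < n" using X x by auto
  have x'n: "(x + 1) mod n < n" using n3 by simp
  have "(\<Sum>v\<in>X - {x}. cd ((x + 1) mod n) v - cd x v)
      = (\<Sum>v\<in>X - {x}. of_bool (inB (int x) v) - of_bool (inA (int x) v))"
  proof (rule sum.cong[OF refl])
    fix v assume v: "v \<in> X - {x}"
    then have "v < n" "v \<noteq> x" "v \<noteq> (x + 1) mod n" using X x' by auto
    then show "cd ((x + 1) mod n) v - cd x v = of_bool (inB (int x) v) - of_bool (inA (int x) v)"
      using fwd_pt xn by blast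
  qed
  also have "\<dots> = (\<Sum>v\<in>X. of_bool (inB (int x) v) - of_bool (inA (int x) v))
                  - (of_bool (inB (int x) x) - of_bool (inA (int x) x))"
    using finX[OF X] x by (simp add: sum_diff1)
  also have "\<dots> = be X (int x) - al X (int x) - 1"
    unfolding al_def be_def inA_def inB_def rr_self using bs by (simp add: sum_subtractf)
  finally have s: "(\<Sum>v\<in>X - {x}. cd ((x + 1) mod n) v - cd x v) = be X (int x) - al X (int x) - 1" .
  show ?thesis using move_diff[OF X x x'n x'] s unfolding b_def be_al by linarith
qed

lemma bwd_move: assumes X: "X \<subseteq> {..<n}" and x: "x \<in> X" and x': "(x + n - 1) mod n \<notin> X"
  shows "int (Wsum E ((X - {x}) \<union> {(x + n - 1) mod n})) - int (Wsum E X) = b X (int x - 1) - 1"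
proof -
  have xn: "x < n" using X x by auto
  have x'n: "(x + n - 1) mod n < n" using n3 by simp
  have "(\<Sum>v\<in>X - {x}. cd ((x + n - 1) mod n) v - cd x v)
      = (\<Sum>v\<in>X - {x}. of_bool (inA (int x - 1) v) - of_bool (inB (int x - 1) v))"
  proof (rule sum.cong[OF refl])
    fix v assume v: "v \<in> X - {x}"
    then have "v < n" "v \<noteq> x" "v \<noteq> (x + n - 1) mod n" using X x' by auto
    then show "cd ((x + n - 1) mod n) v - cd x v = of_bool (inA (int x - 1) v) - of_bool (inB (int x - 1) v)"
      using bwd_pt xn by blast
  qed
  also have "\<dots> = (\<Sum>v\<in>X. of_bool (inA (int x - 1) v) - of_bool (inB (int x - 1) v))
                  - (of_bool (inA (int x - 1) x) - of_bool (inB (int x - 1) x))"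
    using finX[OF X] x by (simp add: sum_diff1)
  also have "\<dots> = al X (int x - 1) - be X (int x - 1) - 1"
    unfolding al_def be_def inA_def inB_def rr_self2 using bs by (simp add: sum_subtractf)
  finally have s: "(\<Sum>v\<in>X - {x}. cd ((x + n - 1) mod n) v - cd x v) = al X (int x - 1) - be X (int x - 1) - 1" .
  show ?thesis using move_diff[OF X x x'n x'] s unfolding b_def be_al by linarith
qed

end


context cyc begin

lemma b_step': assumes X: "X \<subseteq> {..<n}"
  shows "b X j - b X (j - 1) = ind X (j + Mh) + ind X (j + Hh) - 2 * ind X j"
proof -
  have "b X (j - 1 + 1) - b X (j - 1) = ind X (j - 1 + Mh + 1) + ind X (j - 1 + Hh + 1) - 2 * ind X (j - 1 + 1)"
    by (rule b_step[OF X])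
  moreover have "j - 1 + 1 = j" "j - 1 + Mh + 1 = j + Mh" "j - 1 + Hh + 1 = j + Hh" by linarith+
  ultimately show ?thesis by simp
qed

lemma prop_max:
  assumes X: "X \<subseteq> {..<n}"
    and LF: "\<And>j. ind X j = 1 \<Longrightarrow> ind X (j + 1) = 0 \<Longrightarrow> -1 \<le> b X j"
    and LB: "\<And>j. ind X (j + 1) = 1 \<Longrightarrow> ind X j = 0 \<Longrightarrow> b X j \<le> 1"
    and big: "2 \<le> b X j" and m1: "b X (j - 1) \<le> b X j" and p1: "b X (j + 1) \<le> b X j"
  shows "b X (j + 1) = b X j"
proof -
  have s1: "b X (j + 1) - b X j = ind X (j + Mh + 1) + ind X (j + Hh + 1) - 2 * ind X (j + 1)"
    by (rule b_step[OF X])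
  have s0: "b X j - b X (j - 1) = ind X (j + Mh) + ind X (j + Hh) - 2 * ind X j"
    by (rule b_step'[OF X])
  have lb: "ind X (j + 1) = 1 \<Longrightarrow> ind X j = 0 \<Longrightarrow> b X j \<le> 1" by (rule LB)
  have i0: "ind X j = 0 \<or> ind X j = 1" "ind X (j + 1) = 0 \<or> ind X (j + 1) = 1"
    "ind X (j + Mh) = 0 \<or> ind X (j + Mh) = 1" "ind X (j + Mh + 1) = 0 \<or> ind X (j + Mh + 1) = 1"
    "ind X (j + Mh + 2) = 0 \<or> ind X (j + Mh + 2) = 1" by (rule ind01)+
  have "ee = 0 \<or> ee = 1" by auto
  then show ?thesis
  proof
    assume e: "ee = 0"
    then have h: "Hh = Mh" using bee by linarith
    have h1: "j + Hh + 1 = j + Mh + 1" "j + Hh = j + Mh" using h by linarith+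
    have an: "b X j + b X (j + Mh) = 0" using b_anti[OF X, of j] e by simp
    have lf: "ind X (j + Mh) = 1 \<Longrightarrow> ind X (j + Mh + 1) = 0 \<Longrightarrow> -1 \<le> b X (j + Mh)" by (rule LF)
    show ?thesis using s1 s0 lb lf an i0 big m1 p1 unfolding h1 by smt
  next
    assume e: "ee = 1"
    then have h: "Hh = Mh + 1" using bee by linarith
    have h1: "j + Hh + 1 = j + Mh + 2" "j + Hh = j + Mh + 1" using h by linarith+
    have an0: "b X (j + 1) + b X (j + 1 + Mh) = ee * (ind X (j + 1 + Mh + 1) - ind X (j + 1))"
      by (rule b_anti[OF X])
    have h2: "j + 1 + Mh = j + Mh + 1" "j + 1 + Mh + 1 = j + Mh + 2" by linarith+
    have an: "b X (j + 1) + b X (j + Mh + 1) = ind X (j + Mh + 2) - ind X (j + 1)"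
      using an0 unfolding h2(2) unfolding h2(1) e mult.left_neutral .
    have lf0: "ind X (j + Mh + 1) = 1 \<Longrightarrow> ind X (j + Mh + 1 + 1) = 0 \<Longrightarrow> -1 \<le> b X (j + Mh + 1)" by (rule LF)
    have h3: "j + Mh + 1 + 1 = j + Mh + 2" by linarith
    have lf: "ind X (j + Mh + 1) = 1 \<Longrightarrow> ind X (j + Mh + 2) = 0 \<Longrightarrow> -1 \<le> b X (j + Mh + 1)"
      using lf0 unfolding h3 .
    show ?thesis using s1 s0 lb lf an i0 big m1 p1 unfolding h1 by smt
  qed
qed

lemma prop_min:
  assumes X: "X \<subseteq> {..<n}"
    and LF: "\<And>j. ind X j = 1 \<Longrightarrow> ind X (j + 1) = 0 \<Longrightarrow> -1 \<le> b X j"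
    and LB: "\<And>j. ind X (j + 1) = 1 \<Longrightarrow> ind X j = 0 \<Longrightarrow> b X j \<le> 1"
    and big: "b X j \<le> -2" and m1: "b X j \<le> b X (j - 1)" and p1: "b X j \<le> b X (j + 1)"
  shows "b X (j + 1) = b X j"
proof -
  have s1: "b X (j + 1) - b X j = ind X (j + Mh + 1) + ind X (j + Hh + 1) - 2 * ind X (j + 1)"
    by (rule b_step[OF X])
  have s0: "b X j - b X (j - 1) = ind X (j + Mh) + ind X (j + Hh) - 2 * ind X j"
    by (rule b_step'[OF X])
  have lf: "ind X j = 1 \<Longrightarrow> ind X (j + 1) = 0 \<Longrightarrow> -1 \<le> b X j" by (rule LF)
  have i0: "ind X j = 0 \<or> ind X j = 1" "ind X (j + 1) = 0 \<or> ind X (j + 1) = 1"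
    "ind X (j + Mh) = 0 \<or> ind X (j + Mh) = 1" "ind X (j + Mh + 1) = 0 \<or> ind X (j + Mh + 1) = 1"
    "ind X (j + Mh + 2) = 0 \<or> ind X (j + Mh + 2) = 1" by (rule ind01)+
  have "ee = 0 \<or> ee = 1" by auto
  then show ?thesis
  proof
    assume e: "ee = 0"
    then have h: "Hh = Mh" using bee by linarith
    have h1: "j + Hh + 1 = j + Mh + 1" "j + Hh = j + Mh" using h by linarith+
    have an: "b X j + b X (j + Mh) = 0" using b_anti[OF X, of j] e by simp
    have lb: "ind X (j + Mh + 1) = 1 \<Longrightarrow> ind X (j + Mh) = 0 \<Longrightarrow> b X (j + Mh) \<le> 1" by (rule LB)
    show ?thesis using s1 s0 lb lf an i0 big m1 p1 unfolding h1 by smt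
  next
    assume e: "ee = 1"
    then have h: "Hh = Mh + 1" using bee by linarith
    have h1: "j + Hh + 1 = j + Mh + 2" "j + Hh = j + Mh + 1" using h by linarith+
    have an0: "b X (j + 1) + b X (j + 1 + Mh) = ee * (ind X (j + 1 + Mh + 1) - ind X (j + 1))"
      by (rule b_anti[OF X])
    have h2: "j + 1 + Mh = j + Mh + 1" "j + 1 + Mh + 1 = j + Mh + 2" by linarith+
    have an: "b X (j + 1) + b X (j + Mh + 1) = ind X (j + Mh + 2) - ind X (j + 1)"
      using an0 unfolding h2(2) unfolding h2(1) e mult.left_neutral .
    have lb0: "ind X (j + Mh + 1 + 1) = 1 \<Longrightarrow> ind X (j + Mh + 1) = 0 \<Longrightarrow> b X (j + Mh + 1) \<le> 1" by (rule LB)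
    have h3: "j + Mh + 1 + 1 = j + Mh + 2" by linarith
    have lb: "ind X (j + Mh + 2) = 1 \<Longrightarrow> ind X (j + Mh + 1) = 0 \<Longrightarrow> b X (j + Mh + 1) \<le> 1"
      using lb0 unfolding h3 .
    show ?thesis using s1 s0 lb lf an i0 big m1 p1 unfolding h1 by smt
  qed
qed

end


context cyc begin

lemma b_per: "b X (j + N) = b X j"
  using b_mod[of X "j + N"] b_mod[of X j] by simp

lemma max_exists: "\<exists>Mx j0. (\<forall>j. b X j \<le> Mx) \<and> b X j0 = Mx"
proof -
  define S where "S = b X ` {0..<N}"
  have fS: "finite S" "S \<noteq> {}" unfolding S_def using n3 by auto
  have "\<forall>j. b X j \<le> Max S"
  proof
    fix j
    have "j mod N \<in> {0..<N}" using n3 by auto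
    then have "b X (j mod N) \<le> Max S" using fS unfolding S_def by auto
    then show "b X j \<le> Max S" by (simp add: b_mod)
  qed
  moreover obtain j0 where "b X j0 = Max S" using Max_in[OF fS] unfolding S_def by auto
  ultimately show ?thesis by blast
qed

lemma min_exists: "\<exists>Mn j0. (\<forall>j. Mn \<le> b X j) \<and> b X j0 = Mn"
proof -
  define S where "S = b X ` {0..<N}"
  have fS: "finite S" "S \<noteq> {}" unfolding S_def using n3 by auto
  have "\<forall>j. Min S \<le> b X j"
  proof
    fix j
    have "j mod N \<in> {0..<N}" using n3 by auto
    then have "Min S \<le> b X (j mod N)" using fS unfolding S_def by auto
    then show "Min S \<le> b X j" by (simp add: b_mod)
  qed
  moreover obtain j0 where "b X j0 = Min S" using Min_in[OF fS] unfolding S_def by auto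
  ultimately show ?thesis by blast
qed

lemma const_contra: assumes "\<And>i. b X (j0 + int i) = c" shows "c = 0"
proof -
  have "(\<Sum>i<n. b X (j0 + int i)) = (\<Sum>i<n. b X (int i))"
    by (rule per_shift) (rule b_per)
  then have "int n * c = 0" using assms b_sum[of X] by simp
  then show ?thesis using n3 by simp
qed

lemma balanced:
  assumes X: "X \<subseteq> {..<n}"
    and LF: "\<And>j. ind X j = 1 \<Longrightarrow> ind X (j + 1) = 0 \<Longrightarrow> -1 \<le> b X j"
    and LB: "\<And>j. ind X (j + 1) = 1 \<Longrightarrow> ind X j = 0 \<Longrightarrow> b X j \<le> 1"
  shows "-1 \<le> b X j \<and> b X j \<le> 1"
proof
  obtain Mx j0 where M: "\<forall>j. b X j \<le> Mx" "b X j0 = Mx" using max_exists by blast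
  have "Mx \<le> 1"
  proof (rule ccontr)
    assume "\<not> Mx \<le> 1"
    then have big: "2 \<le> Mx" by simp
    have "b X (j0 + int i) = Mx" for i
    proof (induction i)
      case 0 then show ?case using M by simp
    next
      case (Suc i)
      have h: "b X (j0 + int i + 1) = b X (j0 + int i)"
        by (rule prop_max[OF X LF LB]) (use Suc M big in auto)
      have e: "j0 + int (Suc i) = j0 + int i + 1" by simp
      show ?case unfolding e by (simp only: h Suc.IH)
    qed
    then have "Mx = 0" by (rule const_contra)
    then show False using big by simp
  qed
  then show "b X j \<le> 1" using M by (meson order_trans)
next
  obtain Mn j0 where M: "\<forall>j. Mn \<le> b X j" "b X j0 = Mn" using min_exists by blast
  have "-1 \<le> Mn"
  proof (rule ccontr)
    assume "\<not> -1 \<le> Mn"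
    then have big: "Mn \<le> -2" by simp
    have "b X (j0 + int i) = Mn" for i
    proof (induction i)
      case 0 then show ?case using M by simp
    next
      case (Suc i)
      have h: "b X (j0 + int i + 1) = b X (j0 + int i)"
        by (rule prop_min[OF X LF LB]) (use Suc M big in auto)
      have e: "j0 + int (Suc i) = j0 + int i + 1" by simp
      show ?case unfolding e by (simp only: h Suc.IH)
    qed
    then have "Mn = 0" by (rule const_contra)
    then show False using big by simp
  qed
  then show "-1 \<le> b X j" using M by (meson order_trans)
qed

lemma par1: fixes s c :: int assumes "even (s - c)" shows "s mod 2 \<le> c * c"
proof (cases "c = 0")
  case True
  then show ?thesis using assms by simp
next
  case False
  have "1 \<le> \<bar>c\<bar>" using False by simp
  then have "1 \<le> \<bar>c\<bar> * \<bar>c\<bar>" using mult_mono[of 1 "\<bar>c\<bar>" 1 "\<bar>c\<bar>"] by simp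
  then have "1 \<le> c * c" by (simp add: abs_mult_self_eq)
  moreover have "s mod 2 \<le> 1" by simp
  ultimately show ?thesis by linarith
qed

lemma par2: fixes s c :: int assumes "even (s - c)" "-1 \<le> c" "c \<le> 1" shows "c * c = s mod 2"
proof -
  have "c = -1 \<or> c = 0 \<or> c = 1" using assms(2,3) by auto
  then show ?thesis
  proof (elim disjE)
    assume "c = -1" then show ?thesis using assms(1) by (simp add: odd_iff_mod_2_eq_one)
  next
    assume "c = 0" then show ?thesis using assms(1) by simp
  next
    assume "c = 1" then show ?thesis using assms(1) by (simp add: odd_iff_mod_2_eq_one)
  qed
qed

lemma sumG: assumes X: "X \<subseteq> {..<n}"
  shows "(\<Sum>i<n. F (ind X (c + int i))) = (N - int (card X)) * F 0 + int (card X) * F 1"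
proof -
  have "(\<Sum>i<n. F (ind X (c + int i))) = (\<Sum>i<n. F 0 + ind X (c + int i) * (F 1 - F 0))"
  proof (rule sum.cong[OF refl])
    fix i
    show "F (ind X (c + int i)) = F 0 + ind X (c + int i) * (F 1 - F 0)"
      using ind01[of X "c + int i"] by auto
  qed
  also have "\<dots> = N * F 0 + (\<Sum>i<n. ind X (c + int i)) * (F 1 - F 0)"
    by (simp add: sum.distrib sum_distrib_right)
  also have "\<dots> = (N - int (card X)) * F 0 + int (card X) * F 1"
    unfolding ind_sum[OF X] by (simp add: algebra_simps)
  finally show ?thesis .
qed

definition gg :: "nat \<Rightarrow> int \<Rightarrow> int" where
  "gg k g = (int k - ee * g) * (int k - ee * g) - (int k - ee * g) mod 2"

definition TT :: "nat \<Rightarrow> int" where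
  "TT k = (N - int k) * gg k 0 + int k * gg k 1 + 2 * ee * (int k * int k - int k)"

lemma W8: assumes X: "X \<subseteq> {..<n}"
  shows "8 * int (Wsum E X) = (\<Sum>i<n. (al X (int i) + al X (int i + Hh)) * (al X (int i) + al X (int i + Hh))
            - b X (int i) * b X (int i)) + 2 * ee * (int (card X) * int (card X) - int (card X))"
proof -
  have w: "2 * int (Wsum E X) = (\<Sum>i<n. al X (int i) * al X (int i + Hh)) + ee * int (card (Pairs X))"
    using W_cut[OF X] unfolding be_al .
  have cp: "2 * int (card (Pairs X)) = int (card X) * int (card X) - int (card X)"
    by (rule card_pairs[OF finX[OF X]])
  have S: "(\<Sum>i<n. (al X (int i) + al X (int i + Hh)) * (al X (int i) + al X (int i + Hh))
            - b X (int i) * b X (int i)) = 4 * (\<Sum>i<n. al X (int i) * al X (int i + Hh))"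
    unfolding sum_distrib_left b_def by (rule sum.cong) (simp_all add: algebra_simps)
  have e2: "2 * ee * (int (card X) * int (card X) - int (card X)) = 4 * (ee * int (card (Pairs X)))"
    unfolding cp[symmetric] by simp
  show ?thesis using w S e2 by linarith
qed

lemma W_upper: assumes X: "X \<subseteq> {..<n}"
  shows "8 * int (Wsum E X) \<le> TT (card X)"
    and "(\<forall>j. -1 \<le> b X j \<and> b X j \<le> 1) \<Longrightarrow> 8 * int (Wsum E X) = TT (card X)"
proof -
  let ?s = "\<lambda>i. al X (int i) + al X (int i + Hh)"
  have s: "?s i = int (card X) - ee * ind X ((Mh + 1) + int i)" for i
    using s_sum[OF X, of "int i"] by (simp add: algebra_simps)
  have ev: "even (?s i - b X (int i))" for i unfolding b_def by simp
  have G: "(\<Sum>i<n. gg (card X) (ind X ((Mh + 1) + int i))) = (N - int (card X)) * gg (card X) 0 + int (card X) * gg (card X) 1"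
    by (rule sumG[OF X])
  have pt: "?s i * ?s i - b X (int i) * b X (int i) \<le> gg (card X) (ind X ((Mh + 1) + int i))" for i
    using par1[OF ev[of i]] unfolding gg_def s[symmetric] by simp
  have "(\<Sum>i<n. ?s i * ?s i - b X (int i) * b X (int i)) \<le> (\<Sum>i<n. gg (card X) (ind X ((Mh + 1) + int i)))"
    by (rule sum_mono) (rule pt)
  then show "8 * int (Wsum E X) \<le> TT (card X)" unfolding W8[OF X] TT_def G by simp
  assume bal: "\<forall>j. -1 \<le> b X j \<and> b X j \<le> 1"
  have pt2: "?s i * ?s i - b X (int i) * b X (int i) = gg (card X) (ind X ((Mh + 1) + int i))" for i
    using par2[OF ev[of i]] bal unfolding gg_def s[symmetric] by simp
  have "(\<Sum>i<n. ?s i * ?s i - b X (int i) * b X (int i)) = (\<Sum>i<n. gg (card X) (ind X ((Mh + 1) + int i)))"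
    by (rule sum.cong) (simp_all add: pt2)
  then show "8 * int (Wsum E X) = TT (card X)" unfolding W8[OF X] TT_def G by simp
qed

end


lemma pert_props: assumes "Z \<in> perturbations V E X" "X \<subseteq> V" "finite V"
  shows "Z \<subseteq> V \<and> card Z = card X"
proof -
  obtain u v where Z: "Z = (X - {u}) \<union> {v}" "u \<in> X" "v \<in> V - X" using assms(1)
    unfolding perturbations_def by blast
  have fX: "finite X" using assms(2,3) finite_subset by blast
  have "card Z = card (X - {u}) + 1" using Z fX by simp
  also have "\<dots> = card X"
  proof -
    have "card X > 0" using Z fX card_gt_0_iff by blast
    then show ?thesis using Z fX by (simp add: card_Diff_singleton)
  qed
  finally show ?thesis using Z assms(2) by auto
qed

lemma als_props:
  assumes "als V E F A Y" "A \<subseteq> V" "finite V"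
  shows "Y \<subseteq> V \<and> card Y = card A \<and> \<not> (\<exists>Z\<in>perturbations V E Y. F Z > F Y)"
  using assms
proof (induction rule: als.induct)
  case (als_stop X) then show ?case by blast
next
  case (als_step L X j Z)
  have "L ! j \<in> set L"
  proof -
    obtain i where "i < length L" "F X < F (L ! i)" using als_step.hyps(3) by blast
    then have "j < length L \<and> F X < F (L ! j)" unfolding als_step.hyps(4)
      by (rule LeastI[where P="\<lambda>i. i < length L \<and> F X < F (L ! i)", OF conjI])
    then show ?thesis by simp
  qed
  then have p: "L ! j \<in> perturbations V E X" using als_step.hyps(2) by simp
  have "L ! j \<subseteq> V \<and> card (L ! j) = card X" by (rule pert_props[OF p als_step.prems])
  then show ?case using als_step.IH als_step.prems by auto
qed

lemma als_exists:
  assumes fin: "finite V"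
  shows "A \<subseteq> V \<Longrightarrow> \<exists>Y. als V E F A Y"
proof (induction "card {B. B \<subseteq> V \<and> F A < F B}" arbitrary: A rule: less_induct)
  case less
  show ?case
  proof (cases "\<exists>Z\<in>perturbations V E A. F Z > F A")
    case False
    then show ?thesis using als_stop by blast
  next
    case True
    have "perturbations V E A \<subseteq> Pow V" unfolding perturbations_def using less.prems by auto
    then have "finite (perturbations V E A)" using fin finite_subset by blast
    then obtain L where L: "distinct L" "set L = perturbations V E A" using finite_distinct_list by blast
    have ex: "\<exists>i < length L. F (L ! i) > F A"
    proof -
      obtain Z where Z: "Z \<in> set L" "F Z > F A" using True L(2) by blast
      then obtain i where "i < length L" "L ! i = Z" by (auto simp: in_set_conv_nth)
      then show ?thesis using Z by blast
    qed
    define j where "j = (LEAST i. i < length L \<and> F (L ! i) > F A)"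
    have j: "j < length L \<and> F (L ! j) > F A"
      unfolding j_def using ex by (metis (mono_tags, lifting) LeastI)
    have p: "L ! j \<in> perturbations V E A" using j L(2) nth_mem by blast
    have sub: "L ! j \<subseteq> V" using pert_props[OF p less.prems fin] by blast
    have "{B. B \<subseteq> V \<and> F (L ! j) < F B} \<subset> {B. B \<subseteq> V \<and> F A < F B}"
      using j sub by auto
    moreover have "finite {B. B \<subseteq> V \<and> F A < F B}"
      by (rule finite_subset[of _ "Pow V"]) (use fin in auto)
    ultimately have "card {B. B \<subseteq> V \<and> F (L ! j) < F B} < card {B. B \<subseteq> V \<and> F A < F B}"
      by (rule psubset_card_mono[rotated])
    then obtain Y where "als V E F (L ! j) Y" using less.hyps sub by blast
    then have "als V E F A Y" using als_step[OF L(1) L(2) ex j_def] by blast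
    then show ?thesis by blast
  qed
qed

context cyc begin

lemma V_eq: "cycle_V n = {..<n}" unfolding cycle_V_def by auto

lemma locmax_maximizer:
  assumes Y: "Y \<subseteq> {..<n}"
    and nope: "\<not> (\<exists>Z\<in>perturbations (cycle_V n) E Y. Wsum E Z > Wsum E Y)"
  shows "is_maximizer (cycle_V n) (Wsum E) Y"
proof -
  have LFn: "-1 \<le> b Y (int x)" if x: "x \<in> Y" "(x + 1) mod n \<notin> Y" for x
  proof -
    have xn: "x < n" using Y x by auto
    have "(Y - {x}) \<union> {(x + 1) mod n} \<in> perturbations (cycle_V n) E Y"
      unfolding perturbations_def V_eq mem_Collect_eq
      by (rule exI[of _ x], rule exI[of _ "(x + 1) mod n"]) (use x xn n3 in \<open>auto simp: cycle_E_def\<close>)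
    then have "\<not> Wsum E ((Y - {x}) \<union> {(x + 1) mod n}) > Wsum E Y" using nope by blast
    then show ?thesis using fwd_move[OF Y x] by linarith
  qed
  have LBn: "b Y (int x - 1) \<le> 1" if x: "x \<in> Y" "(x + n - 1) mod n \<notin> Y" for x
  proof -
    have xn: "x < n" using Y x by auto
    have "((x + n - 1) mod n + 1) mod n = (x + n - 1 + 1) mod n" by (rule mod_add_left_eq)
    also have "\<dots> = x" using xn n3 by simp
    finally have ed: "cycle_E n x ((x + n - 1) mod n)" unfolding cycle_E_def using xn n3 by auto
    have "(Y - {x}) \<union> {(x + n - 1) mod n} \<in> perturbations (cycle_V n) E Y"
      unfolding perturbations_def V_eq mem_Collect_eq
      by (rule exI[of _ x], rule exI[of _ "(x + n - 1) mod n"]) (use x xn n3 ed in auto)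
    then have "\<not> Wsum E ((Y - {x}) \<union> {(x + n - 1) mod n}) > Wsum E Y" using nope by blast
    then show ?thesis using bwd_move[OF Y x] by linarith
  qed
  have LF: "-1 \<le> b Y j" if "ind Y j = 1" "ind Y (j + 1) = 0" for j
  proof -
    define x where "x = nat (j mod N)"
    have xj: "int x = j mod N" unfolding x_def using n3 by simp
    have xY: "x \<in> Y" using that(1) unfolding ind_def x_def by (simp split: if_splits)
    have "int ((x + 1) mod n) = (j + 1) mod N" unfolding int_suc_mod xj by (simp add: mod_add_left_eq)
    then have "(x + 1) mod n = nat ((j + 1) mod N)" by simp
    then have "(x + 1) mod n \<notin> Y" using that(2) unfolding ind_def by (simp split: if_splits)
    then have "-1 \<le> b Y (int x)" using LFn xY by blast
    then show ?thesis unfolding xj b_mod .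
  qed
  have LB: "b Y j \<le> 1" if "ind Y (j + 1) = 1" "ind Y j = 0" for j
  proof -
    define x where "x = nat ((j + 1) mod N)"
    have xj: "int x = (j + 1) mod N" unfolding x_def using n3 by simp
    have "(j + 1) mod N < N" using n3 by simp
    then have "int x < int n" using xj by simp
    then have xn: "x < n" by simp
    have xY: "x \<in> Y" using that(1) unfolding ind_def x_def by (simp split: if_splits)
    have "int ((x + n - 1) mod n) = (int x + N - 1) mod N" by (rule int_pred_mod[OF xn])
    also have "\<dots> = ((j + 1) mod N + (N - 1)) mod N" unfolding xj by (simp add: algebra_simps)
    also have "\<dots> = (j + 1 + (N - 1)) mod N" by (rule mod_add_left_eq)
    also have "\<dots> = (j + N) mod N" by (simp add: algebra_simps)
    also have "\<dots> = j mod N" by simp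
    finally have "(x + n - 1) mod n = nat (j mod N)" by simp
    then have "(x + n - 1) mod n \<notin> Y" using that(2) unfolding ind_def by (simp split: if_splits)
    then have b1: "b Y (int x - 1) \<le> 1" using LBn xY by blast
    have "(int x - 1) mod N = ((j + 1) mod N - 1) mod N" unfolding xj ..
    also have "\<dots> = (j + 1 - 1) mod N" by (rule mod_diff_left_eq)
    also have "\<dots> = j mod N" by simp
    finally have "b Y (int x - 1) = b Y j" using b_mod[of Y "int x - 1"] b_mod[of Y j] by simp
    then show ?thesis using b1 by simp
  qed
  have bal: "\<forall>j. -1 \<le> b Y j \<and> b Y j \<le> 1" using balanced[OF Y LF LB] by blast
  have eqY: "8 * int (Wsum E Y) = TT (card Y)" using W_upper(2)[OF Y bal] .
  show ?thesis unfolding is_maximizer_def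
  proof (intro conjI allI impI)
    show "Y \<subseteq> cycle_V n" using Y V_eq by simp
    fix B assume B: "B \<subseteq> cycle_V n \<and> card B = card Y"
    then have "8 * int (Wsum E B) \<le> TT (card Y)" using W_upper(1)[of B] V_eq by simp
    then show "Wsum E B \<le> Wsum E Y" using eqY by linarith
  qed
qed

end

theorem mainTheorem14:
  fixes n :: nat and A :: "nat set"
  assumes "n \<ge> 3" and "A \<subseteq> cycle_V n" and "2 \<le> card A" and "card A \<le> n"
  shows "(\<exists>Y. als (cycle_V n) (cycle_E n) (Wsum (cycle_E n)) A Y) \<and>
         (\<forall>Y. als (cycle_V n) (cycle_E n) (Wsum (cycle_E n)) A Y \<longrightarrow>
              is_maximizer (cycle_V n) (Wsum (cycle_E n)) Y)"
proof -
  interpret cyc n using assms(1) by unfold_locales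
  have fin: "finite (cycle_V n)" unfolding cycle_V_def by simp
  show ?thesis
  proof
    show "\<exists>Y. als (cycle_V n) (cycle_E n) (Wsum (cycle_E n)) A Y"
      by (rule als_exists[OF fin assms(2)])
    show "\<forall>Y. als (cycle_V n) (cycle_E n) (Wsum (cycle_E n)) A Y \<longrightarrow>
              is_maximizer (cycle_V n) (Wsum (cycle_E n)) Y"
    proof (intro allI impI)
      fix Y assume "als (cycle_V n) (cycle_E n) (Wsum (cycle_E n)) A Y"
      then have p: "Y \<subseteq> cycle_V n \<and> card Y = card A \<and>
          \<not> (\<exists>Z\<in>perturbations (cycle_V n) (cycle_E n) Y. Wsum (cycle_E n) Z > Wsum (cycle_E n) Y)"
        using als_props assms(2) fin by blast
      then show "is_maximizer (cycle_V n) (Wsum (cycle_E n)) Y"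
        using locmax_maximizer V_eq by auto
    qed
  qed
qed


end
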